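(* Let $\kappa_1>0$, $\kappa_2<0$ and $\gamma=-\kappa_2/\kappa_1$. Let $M$ be the set of all minimum points of $H_2(\mathbf{x},\mathbf{y})=-2\kappa_1\kappa_2G(\mathbf{x},\mathbf{y})+\kappa_1^2h(\mathbf{x},\mathbf{x})+\kappa_2^2h(\mathbf{y},\mathbf{y})$, $\mathbf{x},\mathbf{y}\in D$, $\mathbf{x}\ne\mathbf{y}$. Then there exist $p\in(0,1)$ and $q\in(-1,0)$ depending only on $\gamma$ such that $M=\{(P,Q)\in D\times D: P=p(\cos\theta,\sin\theta),\ Q=q(\cos\theta,\sin\theta),\ \theta\in[0,2\pi)\}$. If $\gamma=1$, then $p=-q=\sqrt{\sqrt5-2}$.
   Context: $D=\{\mathbf{x}\in\mathbb{R}^2:|\mathbf{x}|<1\}$. $G(\mathbf{x},\mathbf{y})=\frac1{2\pi}\ln\frac1{|\mathbf{x}-\mathbf{y}|}-h(\mathbf{x},\mathbf{y})$ is the Dirichlet Green's function of $-\Delta$ in $D$, where $h(\mathbf{x},\mathbf{y})=-\frac1{2\pi}\ln|\mathbf{y}|-\frac1{2\pi}\ln\left|\mathbf{x}-\frac{\mathbf{y}}{|\mathbf{y}|^2}\right|$. *)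

theory Defs
  imports "HOL-Analysis.Analysis"
begin

definition diskD :: "(real^2) set" where
  "diskD = ball 0 1"

text \<open>Regular part of the Green's function. For y = 0 the paper's formula is
 singular; its continuous extension (value 0) is used there.\<close>
definition hreg :: "real^2 \<Rightarrow> real^2 \<Rightarrow> real" where
  "hreg x y = (if y = 0 then 0 else
      - (1 / (2 * pi)) * ln (norm y) - (1 / (2 * pi)) * ln (norm (x - (1 / (norm y)^2) *\<^sub>R y)))"

definition greenD :: "real^2 \<Rightarrow> real^2 \<Rightarrow> real" where
  "greenD x y = (1 / (2 * pi)) * ln (1 / norm (x - y)) - hreg x y"

definition H2 :: "real \<Rightarrow> real \<Rightarrow> real^2 \<Rightarrow> real^2 \<Rightarrow> real" where
  "H2 k1 k2 x y = - 2 * k1 * k2 * greenD x y + k1^2 * hreg x x + k2^2 * hreg y y"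

definition minset :: "real \<Rightarrow> real \<Rightarrow> ((real^2) \<times> (real^2)) set" where
  "minset k1 k2 = {(x, y). x \<in> diskD \<and> y \<in> diskD \<and> x \<noteq> y \<and>
      (\<forall>u v. u \<in> diskD \<longrightarrow> v \<in> diskD \<longrightarrow> u \<noteq> v \<longrightarrow> H2 k1 k2 x y \<le> H2 k1 k2 u v)}"

end

theory Submission
  imports Defs "HOL-Analysis.Analysis"
begin


lemma tanh_artanh_real:
  fixes r :: real assumes "-1 < r" "r < 1" shows "tanh (artanh r) = r"
proof -
  have e: "exp (- 2 * artanh r) = (1 - r) / (1 + r)"
  proof -
    have "- 2 * artanh r = - ln ((1 + r) / (1 - r))" by (simp add: artanh_def)
    also have "exp \<dots> = inverse ((1 + r) / (1 - r))" using assms by (simp add: exp_minus)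
    finally show ?thesis by simp
  qed
  show ?thesis using assms unfolding tanh_real_altdef e by (simp add: field_simps)
qed

lemma tangent_strict:
  fixes f f' :: "real \<Rightarrow> real" and I :: "real set"
  assumes der: "\<And>x. x \<in> I \<Longrightarrow> DERIV f x :> f' x"
    and mono: "\<And>x y. x \<in> I \<Longrightarrow> y \<in> I \<Longrightarrow> x < y \<Longrightarrow> f' x < f' y"
    and I: "\<And>x y z. x \<in> I \<Longrightarrow> z \<in> I \<Longrightarrow> x \<le> y \<Longrightarrow> y \<le> z \<Longrightarrow> y \<in> I"
    and x: "x \<in> I" and c: "c \<in> I" and ne: "x \<noteq> c"
  shows "f x - f c > f' c * (x - c)"
proof (cases "c < x")
  case True
  have "\<exists>z. c < z \<and> z < x \<and> f x - f c = (x - c) * f' z"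
    by (rule MVT2[OF True]) (rule der, rule I[OF c x], auto)
  then obtain z where z: "c < z" "z < x" "f x - f c = (x - c) * f' z" by blast
  have "z \<in> I" using I[OF c x, of z] z by auto
  then have "f' c < f' z" using mono c z by auto
  then show ?thesis using z True by (simp add: mult.commute)
next
  case False
  then have lt: "x < c" using ne by auto
  have "\<exists>z. x < z \<and> z < c \<and> f c - f x = (c - x) * f' z"
    by (rule MVT2[OF lt]) (rule der, rule I[OF x c], auto)
  then obtain z where z: "x < z" "z < c" "f c - f x = (c - x) * f' z" by blast
  have "z \<in> I" using I[OF x c, of z] z by auto
  then have "f' z < f' c" using mono c z by auto
  then have "(c - x) * f' z < (c - x) * f' c" using lt by simp
  then show ?thesis using z by (simp add: algebra_simps)
qed

definition Lf :: "real \<Rightarrow> real" where "Lf a = - ln (1 - (tanh a)\<^sup>2) / 2"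
definition gf :: "real \<Rightarrow> real" where "gf t = - ln (tanh t)"
definition gd :: "real \<Rightarrow> real" where "gd t = tanh t - 1 / tanh t"

lemma tanh_sq_lt1: "(tanh (a::real))\<^sup>2 < 1"
  using tanh_real_bounds[of a] by (simp add: abs_square_less_1 abs_less_iff)

lemma Lf_deriv: "DERIV Lf a :> tanh a"
proof -
  have c: "cosh a \<noteq> 0" by (metis cosh_real_pos less_irrefl)
  have p: "1 - (tanh a)\<^sup>2 > 0" using tanh_sq_lt1[of a] by simp
  show ?thesis unfolding Lf_def[abs_def]
    using c p by (auto intro!: derivative_eq_intros simp: field_simps power2_eq_square)
qed

lemma gf_deriv: assumes "t > 0" shows "DERIV gf t :> gd t"
proof -
  have c: "cosh t \<noteq> 0" by (metis cosh_real_pos less_irrefl)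
  have p: "tanh t > 0" using assms by simp
  show ?thesis unfolding gf_def[abs_def] gd_def
    using c p by (auto intro!: derivative_eq_intros simp: field_simps power2_eq_square)
qed

lemma Lf_tangent: "a \<noteq> a0 \<Longrightarrow> Lf a - Lf a0 > tanh a0 * (a - a0)"
  by (rule tangent_strict[where I=UNIV]) (auto intro: Lf_deriv)

lemma gd_mono: assumes "0 < x" "x < y" shows "gd x < gd y"
proof -
  have "tanh x < tanh y" "0 < tanh x" using assms by auto
  then have "1 / tanh y < 1 / tanh x" by (simp add: frac_less2)
  moreover have "tanh x < tanh y" using assms by simp
  ultimately show ?thesis unfolding gd_def by linarith
qed

lemma gf_tangent: "t > 0 \<Longrightarrow> t0 > 0 \<Longrightarrow> gf t - gf t0 \<ge> gd t0 * (t - t0)"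
  apply (cases "t = t0", simp)
  apply (rule less_imp_le, rule tangent_strict[where I="{0<..}"])
  apply (auto intro: gf_deriv gd_mono)
  done

definition Phi :: "real \<Rightarrow> real \<Rightarrow> real \<Rightarrow> real" where
  "Phi g r s = 2 * g * ln ((1 + r * s) / (r + s)) - ln (1 - r\<^sup>2) - g\<^sup>2 * ln (1 - s\<^sup>2)"

definition crit :: "real \<Rightarrow> real \<Rightarrow> real \<Rightarrow> bool" where
  "crit g u v \<longleftrightarrow> 0 < u \<and> u < 1 \<and> 0 < v \<and> v < 1 \<and> u = g\<^sup>2 * v \<and>
     u * (u + v) * (1 + u * v) = g * (1 - u\<^sup>2) * (1 - v\<^sup>2)"

lemma cosh_nz: "cosh (x::real) \<noteq> 0" by (metis cosh_real_pos less_irrefl)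

lemma Lf_artanh: assumes "-1 < r" "r < 1" shows "Lf (artanh r) = - ln (1 - r\<^sup>2) / 2"
  unfolding Lf_def using tanh_artanh_real[OF assms] by simp

lemma tanh_sum_artanh:
  fixes r s :: real
  assumes "-1 < r" "r < 1" "-1 < s" "s < 1"
  shows "tanh (artanh r + artanh s) = (r + s) / (1 + r * s)"
  using tanh_add[OF cosh_nz cosh_nz, of "artanh r" "artanh s"] tanh_artanh_real assms by simp

lemma Phi_hyp:
  assumes "0 \<le> r" "r < 1" "0 \<le> s" "s < 1" "r + s > 0"
  shows "Phi g r s = 2 * (g * gf (artanh r + artanh s) + Lf (artanh r) + g\<^sup>2 * Lf (artanh s))"
proof -
  have rs: "0 \<le> r * s" using assms by simp
  have "gf (artanh r + artanh s) = - ln ((r + s) / (1 + r * s))"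
    unfolding gf_def using tanh_sum_artanh[of r s] assms by simp
  also have "\<dots> = ln ((1 + r * s) / (r + s))"
    using assms rs by (simp add: ln_div)
  finally have 1: "gf (artanh r + artanh s) = ln ((1 + r * s) / (r + s))" .
  show ?thesis unfolding Phi_def 1 using Lf_artanh assms by (simp add: algebra_simps)
qed

lemma core:
  assumes g: "g > 0" and c: "crit g u v"
    and r: "0 \<le> r" "r < 1" and s: "0 \<le> s" "s < 1" and rs: "r + s > 0"
    and ne: "(r, s) \<noteq> (u, v)"
  shows "Phi g r s > Phi g u v"
proof -
  from c have u: "0 < u" "u < 1" and v: "0 < v" "v < 1" and uv: "u = g\<^sup>2 * v"
    and eq: "u * (u + v) * (1 + u * v) = g * (1 - u\<^sup>2) * (1 - v\<^sup>2)" unfolding crit_def by auto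
  define a where "a = artanh r"
  define b where "b = artanh s"
  define a0 where "a0 = artanh u"
  define b0 where "b0 = artanh v"
  have ta: "tanh a = r" unfolding a_def using r by (intro tanh_artanh_real) auto
  have tb: "tanh b = s" unfolding b_def using s by (intro tanh_artanh_real) auto
  have ta0: "tanh a0 = u" unfolding a0_def using u by (intro tanh_artanh_real) auto
  have tb0: "tanh b0 = v" unfolding b0_def using v by (intro tanh_artanh_real) auto
  have "a + b > 0"
  proof -
    have "a \<ge> 0" "b \<ge> 0" using ta tb r s tanh_real_nonneg_iff by metis+
    moreover have "r > 0 \<or> s > 0" using r s rs by linarith
    then have "a > 0 \<or> b > 0" using ta tb tanh_real_pos_iff by metis
    ultimately show ?thesis by auto
  qed
  have "a0 > 0" "b0 > 0" using ta0 tb0 u v by (metis tanh_real_pos_iff)+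
  define t0 where "t0 = a0 + b0"
  have T0: "tanh t0 = (u + v) / (1 + u * v)" unfolding t0_def a0_def b0_def
    using u v by (intro tanh_sum_artanh) auto
  have d1: "(1 + u * v)\<^sup>2 - (u + v)\<^sup>2 = (1 - u\<^sup>2) * (1 - v\<^sup>2)" by (simp add: power2_eq_square algebra_simps)
  have pos: "u + v > 0" "1 + u * v > 0" using u v by (auto intro: add_pos_nonneg)
  have gd0: "gd t0 = ((u + v)\<^sup>2 - (1 + u * v)\<^sup>2) / ((u + v) * (1 + u * v))"
    unfolding gd_def T0 using pos by (simp add: field_simps power2_eq_square)
  have k1: "u + g * gd t0 = 0"
  proof -
    have "g * gd t0 = - (g * (1 - u\<^sup>2) * (1 - v\<^sup>2)) / ((u + v) * (1 + u * v))"
    proof -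
      have "(u + v)\<^sup>2 - (1 + u * v)\<^sup>2 = - ((1 - u\<^sup>2) * (1 - v\<^sup>2))" using d1 by linarith
      then show ?thesis unfolding gd0 by simp
    qed
    also have "\<dots> = - (u * ((u + v) * (1 + u * v))) / ((u + v) * (1 + u * v))" unfolding eq[symmetric] by (simp add: algebra_simps)
    also have "\<dots> = - u" using pos by simp
    finally show ?thesis by simp
  qed
  have k2: "g\<^sup>2 * v + g * gd t0 = 0" using k1 uv by simp
  have ga: "gf (a + b) - gf t0 \<ge> gd t0 * ((a + b) - t0)"
    using gf_tangent[OF \<open>a + b > 0\<close>] \<open>a0 > 0\<close> \<open>b0 > 0\<close> t0_def by simp
  have A: "Lf a - Lf a0 \<ge> u * (a - a0)" and B: "Lf b - Lf b0 \<ge> v * (b - b0)"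
    using Lf_tangent[of a a0] Lf_tangent[of b b0] ta0 tb0 by (cases "a = a0"; cases "b = b0"; force)+
  have strict: "(Lf a - Lf a0) + g\<^sup>2 * (Lf b - Lf b0) > u * (a - a0) + g\<^sup>2 * (v * (b - b0))"
  proof (cases "a = a0")
    case True
    then have "b \<noteq> b0" using ne ta tb ta0 tb0 by auto
    then have "Lf b - Lf b0 > v * (b - b0)" using Lf_tangent tb0 by metis
    then have "g\<^sup>2 * (Lf b - Lf b0) > g\<^sup>2 * (v * (b - b0))" using g by simp
    then show ?thesis using A by linarith
  next
    case False
    then have "Lf a - Lf a0 > u * (a - a0)" using Lf_tangent ta0 by metis
    moreover have "g\<^sup>2 * (Lf b - Lf b0) \<ge> g\<^sup>2 * (v * (b - b0))" using B by (simp add: mult_left_mono)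
    ultimately show ?thesis by linarith
  qed
  have gga: "g * (gf (a + b) - gf t0) \<ge> g * (gd t0 * ((a + b) - t0))"
    using ga g by (simp add: mult_left_mono)
  have lin: "g * (gd t0 * ((a + b) - t0)) + (u * (a - a0) + g\<^sup>2 * (v * (b - b0))) = 0"
  proof -
    have "g * (gd t0 * ((a + b) - t0)) + (u * (a - a0) + g\<^sup>2 * (v * (b - b0)))
       = (u + g * gd t0) * (a - a0) + (g\<^sup>2 * v + g * gd t0) * (b - b0)"
      unfolding t0_def by (simp add: algebra_simps)
    then show ?thesis using k1 k2 by simp
  qed
  have "Phi g r s = 2 * (g * gf (a + b) + Lf a + g\<^sup>2 * Lf b)"
    unfolding a_def b_def using r s rs by (intro Phi_hyp) auto
  moreover have "Phi g u v = 2 * (g * gf t0 + Lf a0 + g\<^sup>2 * Lf b0)"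
    unfolding a0_def b0_def t0_def using u v by (intro Phi_hyp) auto
  ultimately show ?thesis using gga strict lin by (simp add: algebra_simps)
qed



lemma Nid: "1 - 2 * (x \<bullet> y) + (norm x)\<^sup>2 * (norm y)\<^sup>2
   = (norm (x - y))\<^sup>2 + (1 - (norm x)\<^sup>2) * (1 - (norm y)\<^sup>2)" for x y :: "real^2"
  by (simp add: power2_norm_eq_inner inner_diff algebra_simps inner_commute)

lemma Npos: assumes "norm (x::real^2) < 1" "norm (y::real^2) < 1"
  shows "1 - 2 * (x \<bullet> y) + (norm x)\<^sup>2 * (norm y)\<^sup>2 > 0"
proof -
  have "(1 - (norm x)\<^sup>2) > 0" "(1 - (norm y)\<^sup>2) > 0" using assms
    by (simp_all add: abs_square_less_1)
  then have "(1 - (norm x)\<^sup>2) * (1 - (norm y)\<^sup>2) > 0" by simp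
  then show ?thesis unfolding Nid by (smt (verit) zero_le_power2)
qed

lemma hreg_formula:
  assumes x: "norm (x::real^2) < 1" and y: "norm (y::real^2) < 1"
  shows "hreg x y = - (1 / (4 * pi)) * ln (1 - 2 * (x \<bullet> y) + (norm x)\<^sup>2 * (norm y)\<^sup>2)"
proof (cases "y = 0")
  case True then show ?thesis by (simp add: hreg_def)
next
  case False
  define c where "c = 1 / (norm y)\<^sup>2"
  have ny: "norm y > 0" using False by simp
  have "norm (c *\<^sub>R y) = 1 / norm y" unfolding c_def using ny by (simp add: power2_eq_square)
  moreover have "1 / norm y > 1" using ny y by simp
  ultimately have "x \<noteq> c *\<^sub>R y" using x by auto
  then have nz: "norm (x - c *\<^sub>R y) > 0" by simp
  have sq: "(norm y)\<^sup>2 * (norm (x - c *\<^sub>R y))\<^sup>2 = 1 - 2 * (x \<bullet> y) + (norm x)\<^sup>2 * (norm y)\<^sup>2"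
    unfolding power2_norm_eq_inner inner_diff inner_scaleR_left inner_scaleR_right c_def
    using ny by (simp add: field_simps power2_norm_eq_inner[symmetric] inner_commute power2_eq_square)
  have "ln (norm y) + ln (norm (x - c *\<^sub>R y)) = ln (norm y * norm (x - c *\<^sub>R y))"
    using ny nz by (simp add: ln_mult)
  also have "norm y * norm (x - c *\<^sub>R y) = sqrt (1 - 2 * (x \<bullet> y) + (norm x)\<^sup>2 * (norm y)\<^sup>2)"
    unfolding sq[symmetric] using ny nz by (simp add: real_sqrt_mult)
  also have "ln \<dots> = ln (1 - 2 * (x \<bullet> y) + (norm x)\<^sup>2 * (norm y)\<^sup>2) / 2"
    using Npos[OF x y] by (simp add: ln_sqrt)
  finally have "ln (norm y) + ln (norm (x - c *\<^sub>R y)) = ln (1 - 2 * (x \<bullet> y) + (norm x)\<^sup>2 * (norm y)\<^sup>2) / 2" .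
  moreover have "- (1 / (2 * pi)) * ln (norm y) - (1 / (2 * pi)) * ln (norm (x - c *\<^sub>R y))
     = - (1 / (4 * pi)) * (2 * (ln (norm y) + ln (norm (x - c *\<^sub>R y))))" by (simp add: field_simps)
  ultimately have "- (1 / (2 * pi)) * ln (norm y) - (1 / (2 * pi)) * ln (norm (x - c *\<^sub>R y))
     = - (1 / (4 * pi)) * ln (1 - 2 * (x \<bullet> y) + (norm x)\<^sup>2 * (norm y)\<^sup>2)" by simp
  then show ?thesis unfolding hreg_def c_def using False by simp
qed

definition Fg :: "real \<Rightarrow> real^2 \<Rightarrow> real^2 \<Rightarrow> real" where
  "Fg g x y = g * ln (1 + (1 - (norm x)\<^sup>2) * (1 - (norm y)\<^sup>2) / (norm (x - y))\<^sup>2)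
     - ln (1 - (norm x)\<^sup>2) - g\<^sup>2 * ln (1 - (norm y)\<^sup>2)"

lemma H2_formula:
  assumes k1: "k1 > 0" and x: "norm (x::real^2) < 1" and y: "norm (y::real^2) < 1" and ne: "x \<noteq> y"
  shows "H2 k1 k2 x y = k1\<^sup>2 / (2 * pi) * Fg (- k2 / k1) x y"
proof -
  define N where "N = 1 - 2 * (x \<bullet> y) + (norm x)\<^sup>2 * (norm y)\<^sup>2"
  define d where "d = norm (x - y)"
  define P where "P = (1 - (norm x)\<^sup>2) * (1 - (norm y)\<^sup>2)"
  have dpos: "d > 0" using ne unfolding d_def by simp
  have px: "1 - (norm x)\<^sup>2 > 0" "1 - (norm y)\<^sup>2 > 0" using x y by (simp_all add: abs_square_less_1)
  have Ppos: "P > 0" unfolding P_def using px by simp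
  have NdP: "N = d\<^sup>2 + P" unfolding N_def d_def P_def by (rule Nid)
  have hx: "hreg x x = - (1 / (2 * pi)) * ln (1 - (norm x)\<^sup>2)"
  proof -
    have i: "x \<bullet> x = (norm x)\<^sup>2" by (simp add: power2_norm_eq_inner)
    have "1 - 2 * (x \<bullet> x) + (norm x)\<^sup>2 * (norm x)\<^sup>2 = (1 - (norm x)\<^sup>2)\<^sup>2"
      unfolding i by (simp add: power2_eq_square algebra_simps)
    then show ?thesis using hreg_formula[OF x x] px by (simp add: ln_realpow)
  qed
  have hy: "hreg y y = - (1 / (2 * pi)) * ln (1 - (norm y)\<^sup>2)"
  proof -
    have i: "y \<bullet> y = (norm y)\<^sup>2" by (simp add: power2_norm_eq_inner)
    have "1 - 2 * (y \<bullet> y) + (norm y)\<^sup>2 * (norm y)\<^sup>2 = (1 - (norm y)\<^sup>2)\<^sup>2"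
      unfolding i by (simp add: power2_eq_square algebra_simps)
    then show ?thesis using hreg_formula[OF y y] px by (simp add: ln_realpow)
  qed
  have G: "greenD x y = (1 / (4 * pi)) * ln (1 + P / d\<^sup>2)"
  proof -
    have "ln (1 / d) = - ln (d\<^sup>2) / 2" using dpos by (simp add: ln_div ln_realpow)
    moreover have "ln (1 + P / d\<^sup>2) = ln N - ln (d\<^sup>2)"
    proof -
      have "1 + P / d\<^sup>2 = N / d\<^sup>2" using dpos NdP by (simp add: field_simps)
      moreover have "N > 0" using NdP Ppos by (smt (verit) zero_le_power2)
      ultimately show ?thesis using dpos by (simp add: ln_div)
    qed
    ultimately show ?thesis unfolding greenD_def hreg_formula[OF x y] N_def[symmetric] d_def[symmetric]
      by (simp add: algebra_simps) (metis add_divide_distrib)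
  qed
  have k2: "k2 = - (- k2 / k1) * k1" using k1 by simp
  show ?thesis unfolding H2_def G hx hy Fg_def P_def[symmetric] d_def[symmetric]
    apply (subst (1 2 3 4) k2)
    apply (simp add: field_simps power2_eq_square)
    done
qed



lemma Phi_alt:
  assumes "0 \<le> r" "r < 1" "0 \<le> s" "s < 1" "r + s > 0"
  shows "Phi g r s = g * ln (1 + (1 - r\<^sup>2) * (1 - s\<^sup>2) / (r + s)\<^sup>2) - ln (1 - r\<^sup>2) - g\<^sup>2 * ln (1 - s\<^sup>2)"
proof -
  have z: "(1 + r * s) / (r + s) > 0" using assms by (simp add: add_pos_nonneg)
  have "2 * ln ((1 + r * s) / (r + s)) = ln (((1 + r * s) / (r + s))\<^sup>2)"
    using z by (simp add: ln_realpow)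
  also have "((1 + r * s) / (r + s))\<^sup>2 = 1 + (1 - r\<^sup>2) * (1 - s\<^sup>2) / (r + s)\<^sup>2"
  proof -
    have ne: "(r + s)\<^sup>2 \<noteq> 0" using assms by simp
    have "(1 + r * s)\<^sup>2 = (r + s)\<^sup>2 + (1 - r\<^sup>2) * (1 - s\<^sup>2)" by (simp add: power2_eq_square algebra_simps)
    then have "((1 + r * s) / (r + s))\<^sup>2 = ((r + s)\<^sup>2 + (1 - r\<^sup>2) * (1 - s\<^sup>2)) / (r + s)\<^sup>2"
      by (simp add: power_divide)
    also have "\<dots> = 1 + (1 - r\<^sup>2) * (1 - s\<^sup>2) / (r + s)\<^sup>2" using ne by (simp add: add_divide_distrib)
    finally show ?thesis .
  qed
  finally show ?thesis unfolding Phi_def by (simp add: algebra_simps)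
qed

lemma Fg_vs_Phi:
  fixes x y :: "real^2"
  assumes g: "g > 0" and x: "norm x < 1" and y: "norm y < 1" and ne: "x \<noteq> y"
  shows "Phi g (norm x) (norm y) \<le> Fg g x y"
    and "norm (x - y) < norm x + norm y \<Longrightarrow> Phi g (norm x) (norm y) < Fg g x y"
    and "norm (x - y) = norm x + norm y \<Longrightarrow> Phi g (norm x) (norm y) = Fg g x y"
proof -
  define r where "r = norm x"
  define s where "s = norm y"
  define d where "d = norm (x - y)"
  define P where "P = (1 - r\<^sup>2) * (1 - s\<^sup>2)"
  have dpos: "d > 0" using ne unfolding d_def by simp
  have dle: "d \<le> r + s" unfolding d_def r_def s_def by (rule norm_triangle_ineq4)
  have px: "1 - r\<^sup>2 > 0" "1 - s\<^sup>2 > 0" using x y unfolding r_def s_def by (simp_all add: abs_square_less_1)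
  have Ppos: "P > 0" unfolding P_def using px by simp
  have rs: "r + s > 0" using dpos dle by simp
  have Phi: "Phi g r s = g * ln (1 + P / (r + s)\<^sup>2) - ln (1 - r\<^sup>2) - g\<^sup>2 * ln (1 - s\<^sup>2)"
    unfolding P_def using x y rs unfolding r_def s_def by (intro Phi_alt) auto
  have F: "Fg g x y = g * ln (1 + P / d\<^sup>2) - ln (1 - r\<^sup>2) - g\<^sup>2 * ln (1 - s\<^sup>2)"
    unfolding Fg_def P_def r_def s_def d_def ..
  have sq: "d\<^sup>2 \<le> (r + s)\<^sup>2" using dle dpos by (simp add: power_mono)
  have p1: "0 < 1 + P / (r + s)\<^sup>2" using Ppos rs by (simp add: add_pos_pos)
  have le: "P / (r + s)\<^sup>2 \<le> P / d\<^sup>2" using sq Ppos dpos by (simp add: frac_le)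
  then have "ln (1 + P / (r + s)\<^sup>2) \<le> ln (1 + P / d\<^sup>2)" using p1 by simp
  then show "Phi g (norm x) (norm y) \<le> Fg g x y"
    unfolding Phi F r_def[symmetric] s_def[symmetric] using g by (simp add: mult_left_mono)
  show "Phi g (norm x) (norm y) < Fg g x y" if lt: "norm (x - y) < norm x + norm y"
  proof -
    have "d < r + s" using lt unfolding d_def r_def s_def .
    then have sq: "d\<^sup>2 < (r + s)\<^sup>2" using dpos by (simp add: power_strict_mono)
    have "P / (r + s)\<^sup>2 < P / d\<^sup>2" using sq Ppos dpos by (simp add: frac_less2)
    then have "ln (1 + P / (r + s)\<^sup>2) < ln (1 + P / d\<^sup>2)" using p1 by simp
    then show ?thesis
      unfolding Phi F r_def[symmetric] s_def[symmetric] using g by simp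
  qed
  show "Phi g (norm x) (norm y) = Fg g x y" if eq: "norm (x - y) = norm x + norm y"
    using eq unfolding Phi F r_def[symmetric] s_def[symmetric] d_def[symmetric] by simp
qed

lemma crit_exists:
  assumes g: "g > 0" shows "\<exists>u v. crit g u v"
proof -
  define k where "k = (\<lambda>v::real. g\<^sup>2 * v * (g\<^sup>2 * v + v) * (1 + g\<^sup>2 * v * v)
      - g * (1 - (g\<^sup>2 * v)\<^sup>2) * (1 - v\<^sup>2))"
  define m where "m = min 1 (1 / g\<^sup>2)"
  have m: "0 < m" "m \<le> 1" "g\<^sup>2 * m \<le> 1" using g unfolding m_def by (auto simp: min_def field_simps)
  have k0: "k 0 < 0" unfolding k_def using g by simp
  have km: "k m > 0"
  proof -
    have "(1 - (g\<^sup>2 * m)\<^sup>2) * (1 - m\<^sup>2) = 0"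
    proof (cases "g\<^sup>2 \<le> 1")
      case True then have "m = 1" unfolding m_def using g by (simp add: field_simps)
      then show ?thesis by simp
    next
      case False then have "m = 1 / g\<^sup>2" unfolding m_def using g by (simp add: field_simps)
      then show ?thesis using g by simp
    qed
    moreover have "g\<^sup>2 * m * (g\<^sup>2 * m + m) * (1 + g\<^sup>2 * m * m) > 0" using m g
      by (intro mult_pos_pos add_pos_pos) auto
    moreover have "k m = g\<^sup>2 * m * (g\<^sup>2 * m + m) * (1 + g\<^sup>2 * m * m) - g * ((1 - (g\<^sup>2 * m)\<^sup>2) * (1 - m\<^sup>2))"
      unfolding k_def by (simp add: mult.assoc)
    ultimately show ?thesis by (metis diff_zero mult_zero_right)
  qed
  have cont: "continuous_on {0..m} k" unfolding k_def by (intro continuous_intros)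
  obtain v where v: "0 \<le> v" "v \<le> m" "k v = 0" using IVT'[of k 0 0 m, OF _ _ _ cont] k0 km m by auto
  have "v \<noteq> 0" "v \<noteq> m" using v k0 km by auto
  then have v': "0 < v" "v < m" using v by auto
  have "g\<^sup>2 * v < g\<^sup>2 * m" using v' g by simp
  then have lt1: "g\<^sup>2 * v < 1" using m by linarith
  have "g\<^sup>2 * v * (g\<^sup>2 * v + v) * (1 + g\<^sup>2 * v * v) = g * (1 - (g\<^sup>2 * v)\<^sup>2) * (1 - v\<^sup>2)"
    using v(3) unfolding k_def by simp
  then have "crit g (g\<^sup>2 * v) v" unfolding crit_def using v' m g lt1
    by (auto simp: mult.assoc)
  then show ?thesis by blast
qed

lemma crit_one: assumes "crit 1 u v" shows "u = sqrt (sqrt 5 - 2)" "v = sqrt (sqrt 5 - 2)"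
proof -
  from assms have u: "u = v" and v: "0 < v" and e: "v * (v + v) * (1 + v * v) = (1 - v\<^sup>2) * (1 - v\<^sup>2)"
    unfolding crit_def by auto
  have "(v\<^sup>2 + 2)\<^sup>2 = 5" using e by (simp add: power2_eq_square algebra_simps)
  then have "v\<^sup>2 + 2 = sqrt 5" by (metis abs_of_nonneg add_nonneg_nonneg real_sqrt_abs zero_le_numeral zero_le_power2)
  then have "v\<^sup>2 = sqrt 5 - 2" by simp
  then show "v = sqrt (sqrt 5 - 2)" using v by (metis abs_of_pos real_sqrt_abs)
  then show "u = sqrt (sqrt 5 - 2)" using u by simp
qed



definition ev :: "real \<Rightarrow> real^2" where "ev t = vector [cos t, sin t]"

lemma norm_ev: "norm (ev t) = 1"
  unfolding ev_def norm_eq_sqrt_inner inner_vec_def sum_2 by simp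

lemma ev_of_unit:
  fixes e :: "real^2" assumes "norm e = 1"
  obtains t where "0 \<le> t" "t < 2 * pi" "e = ev t"
proof -
  have "(e $ 1)\<^sup>2 + (e $ 2)\<^sup>2 = 1"
    using assms unfolding norm_eq_sqrt_inner inner_vec_def sum_2 by (simp add: power2_eq_square)
  then obtain t where t: "0 \<le> t" "t < 2 * pi" "e $ 1 = cos t" "e $ 2 = sin t"
    by (rule sincos_total_2pi)
  have "e = ev t" unfolding ev_def vec_eq_iff forall_2 using t by simp
  then show ?thesis using t that by blast
qed

lemma key_lower:
  fixes x y :: "real^2"
  assumes g: "g > 0" and c: "crit g u v" and x: "norm x < 1" and y: "norm y < 1" and ne: "x \<noteq> y"
  shows "Phi g u v \<le> Fg g x y"
proof -
  have "x \<noteq> 0 \<or> y \<noteq> 0" using ne by auto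
  then have pos: "norm x + norm y > 0" by (auto intro: add_pos_nonneg add_nonneg_pos)
  have "Phi g u v \<le> Phi g (norm x) (norm y)"
  proof (cases "(norm x, norm y) = (u, v)")
    case True then show ?thesis by simp
  next
    case False
    show ?thesis using core[OF g c _ x _ y pos False] by simp
  qed
  also have "\<dots> \<le> Fg g x y" by (rule Fg_vs_Phi(1)[OF g x y ne])
  finally show ?thesis .
qed

lemma key_eq:
  fixes x y :: "real^2"
  assumes g: "g > 0" and c: "crit g u v" and x: "norm x < 1" and y: "norm y < 1" and ne: "x \<noteq> y"
    and eq: "Fg g x y = Phi g u v"
  shows "\<exists>t\<in>{0..<2*pi}. x = u *\<^sub>R ev t \<and> y = (- v) *\<^sub>R ev t"
proof -
  have "x \<noteq> 0 \<or> y \<noteq> 0" using ne by auto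
  then have pos: "norm x + norm y > 0" by (auto intro: add_pos_nonneg add_nonneg_pos)
  have rs: "(norm x, norm y) = (u, v)"
  proof (rule ccontr)
    assume "(norm x, norm y) \<noteq> (u, v)"
    then have "Phi g u v < Phi g (norm x) (norm y)" using core[OF g c _ x _ y pos] by simp
    also have "\<dots> \<le> Fg g x y" by (rule Fg_vs_Phi(1)[OF g x y ne])
    finally show False using eq by simp
  qed
  have d: "norm (x - y) = norm x + norm y"
  proof (rule ccontr)
    assume "norm (x - y) \<noteq> norm x + norm y"
    then have "norm (x - y) < norm x + norm y" using norm_triangle_ineq4[of x y] by linarith
    then have "Phi g (norm x) (norm y) < Fg g x y" by (rule Fg_vs_Phi(2)[OF g x y ne])
    then show False using eq rs by simp
  qed
  from c have u: "0 < u" and v: "0 < v" unfolding crit_def by auto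
  have nx: "norm x = u" and ny: "norm y = v" using rs by auto
  have "norm (x + (- y)) = norm x + norm (- y)" using d by simp
  then have "norm x *\<^sub>R (- y) = norm (- y) *\<^sub>R x" by (simp only: norm_triangle_eq)
  then have yx: "u *\<^sub>R (- y) = v *\<^sub>R x" using nx ny by simp
  define e where "e = (1 / u) *\<^sub>R x"
  have ne1: "norm e = 1" unfolding e_def using nx u by simp
  have xe: "x = u *\<^sub>R e" unfolding e_def using u by simp
  have ye: "y = (- v) *\<^sub>R e"
  proof -
    have uy: "u *\<^sub>R y = - (v *\<^sub>R x)" using yx by (metis minus_minus scaleR_minus_right)
    have "y = (1 / u) *\<^sub>R (u *\<^sub>R y)" using u by simp
    also have "\<dots> = (- v) *\<^sub>R ((1 / u) *\<^sub>R x)" unfolding uy by (simp add: algebra_simps)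
    finally show ?thesis unfolding e_def .
  qed
  obtain t where "0 \<le> t" "t < 2 * pi" "e = ev t" using ev_of_unit[OF ne1] by blast
  then show ?thesis using xe ye by auto
qed

lemma key_attained:
  assumes g: "g > 0" and c: "crit g u v"
  shows "norm (u *\<^sub>R ev t) < 1" "norm ((- v) *\<^sub>R ev t) < 1" "u *\<^sub>R ev t \<noteq> (- v) *\<^sub>R ev t"
    "Fg g (u *\<^sub>R ev t) ((- v) *\<^sub>R ev t) = Phi g u v"
proof -
  from c have u: "0 < u" "u < 1" and v: "0 < v" "v < 1" unfolding crit_def by auto
  show n1: "norm (u *\<^sub>R ev t) < 1" "norm ((- v) *\<^sub>R ev t) < 1" using u v by (simp_all add: norm_ev)
  have d: "u *\<^sub>R ev t - (- v) *\<^sub>R ev t = (u + v) *\<^sub>R ev t" by (simp add: algebra_simps)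
  show ne: "u *\<^sub>R ev t \<noteq> (- v) *\<^sub>R ev t"
  proof
    assume "u *\<^sub>R ev t = (- v) *\<^sub>R ev t"
    then have "norm ((u + v) *\<^sub>R ev t) = 0" using d by simp
    then show False using u v by (simp add: norm_ev)
  qed
  have "norm (u *\<^sub>R ev t - (- v) *\<^sub>R ev t) = norm (u *\<^sub>R ev t) + norm ((- v) *\<^sub>R ev t)"
    unfolding d using u v by (simp add: norm_ev)
  then have "Phi g (norm (u *\<^sub>R ev t)) (norm ((- v) *\<^sub>R ev t)) = Fg g (u *\<^sub>R ev t) ((- v) *\<^sub>R ev t)"
    by (rule Fg_vs_Phi(3)[OF g n1 ne])
  then show "Fg g (u *\<^sub>R ev t) ((- v) *\<^sub>R ev t) = Phi g u v" using u v by (simp add: norm_ev)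
qed

definition cvf :: "real \<Rightarrow> real \<times> real" where "cvf g = (SOME p. crit g (fst p) (snd p))"

lemma cvf_crit: assumes "g > 0" shows "crit g (fst (cvf g)) (snd (cvf g))"
proof -
  obtain u v where "crit g u v" using crit_exists[OF assms] by blast
  then have "\<exists>p. crit g (fst p) (snd p)" by (intro exI[of _ "(u, v)"]) simp
  then show ?thesis unfolding cvf_def by (rule someI_ex)
qed

theorem propositionA1:
  shows "\<exists>pf qf :: real \<Rightarrow> real. \<forall>k1 k2 :: real. k1 > 0 \<longrightarrow> k2 < 0 \<longrightarrow>
    (let \<gamma> = - k2 / k1 in
      pf \<gamma> \<in> {0<..<1} \<and> qf \<gamma> \<in> {-1<..<0} \<and>
      minset k1 k2 = {(P, Q). P \<in> diskD \<and> Q \<in> diskD \<and>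
         (\<exists>\<theta>\<in>{0..<2*pi}. P = pf \<gamma> *\<^sub>R vector [cos \<theta>, sin \<theta>] \<and>
                          Q = qf \<gamma> *\<^sub>R vector [cos \<theta>, sin \<theta>])} \<and>
      (\<gamma> = 1 \<longrightarrow> pf \<gamma> = sqrt (sqrt 5 - 2) \<and> qf \<gamma> = - sqrt (sqrt 5 - 2)))"
proof (rule exI[of _ "\<lambda>g. fst (cvf g)"], rule exI[of _ "\<lambda>g. - snd (cvf g)"], intro allI impI)
  fix k1 k2 :: real
  assume k1: "k1 > 0" and k2: "k2 < 0"
  define g where "g = - k2 / k1"
  have g: "g > 0" unfolding g_def using k1 k2 by (simp add: divide_neg_pos)
  define u where "u = fst (cvf g)"
  define v where "v = snd (cvf g)"
  have c: "crit g u v" unfolding u_def v_def using cvf_crit[OF g] .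
  then have u: "0 < u" "u < 1" and v: "0 < v" "v < 1" unfolding crit_def by auto
  have D: "\<And>z. z \<in> diskD \<longleftrightarrow> norm z < 1" unfolding diskD_def by simp
  have H: "\<And>x y. norm x < 1 \<Longrightarrow> norm y < 1 \<Longrightarrow> x \<noteq> y \<Longrightarrow> H2 k1 k2 x y = k1\<^sup>2 / (2 * pi) * Fg g x y"
    unfolding g_def using k1 by (rule H2_formula)
  have kp: "k1\<^sup>2 / (2 * pi) > 0" using k1 by simp
  have S1: "(P, Q) \<in> {(P, Q). P \<in> diskD \<and> Q \<in> diskD \<and>
         (\<exists>\<theta>\<in>{0..<2*pi}. P = u *\<^sub>R vector [cos \<theta>, sin \<theta>] \<and>
                          Q = (- v) *\<^sub>R vector [cos \<theta>, sin \<theta>])}" if m: "(P, Q) \<in> minset k1 k2" for P Q :: "real^2"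
  proof -
    from m have P: "norm P < 1" and Q: "norm Q < 1" and ne: "P \<noteq> Q"
      and all: "\<And>U V. norm U < 1 \<Longrightarrow> norm V < 1 \<Longrightarrow> U \<noteq> V \<Longrightarrow> H2 k1 k2 P Q \<le> H2 k1 k2 U V"
      unfolding minset_def D by auto
    note A = key_attained[OF g c, of 0]
    have "H2 k1 k2 P Q \<le> H2 k1 k2 (u *\<^sub>R ev 0) ((- v) *\<^sub>R ev 0)" by (rule all[OF A(1) A(2) A(3)])
    then have "k1\<^sup>2 / (2 * pi) * Fg g P Q \<le> k1\<^sup>2 / (2 * pi) * Phi g u v"
      using H[OF P Q ne] H[OF A(1,2,3)] A(4) by simp
    then have "Fg g P Q \<le> Phi g u v" using kp by (meson mult_le_cancel_left_pos)
    then have "Fg g P Q = Phi g u v" using key_lower[OF g c P Q ne] by simp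
    then have "\<exists>t\<in>{0..<2*pi}. P = u *\<^sub>R ev t \<and> Q = (- v) *\<^sub>R ev t" by (rule key_eq[OF g c P Q ne])
    then show ?thesis using P Q unfolding D ev_def by auto
  qed
  have S2: "(P, Q) \<in> minset k1 k2" if r: "(P, Q) \<in> {(P, Q). P \<in> diskD \<and> Q \<in> diskD \<and>
         (\<exists>\<theta>\<in>{0..<2*pi}. P = u *\<^sub>R vector [cos \<theta>, sin \<theta>] \<and>
                          Q = (- v) *\<^sub>R vector [cos \<theta>, sin \<theta>])}" for P Q :: "real^2"
  proof -
    from r obtain t where t: "t \<in> {0..<2*pi}" and PQ': "P = u *\<^sub>R ev t" "Q = (- v) *\<^sub>R ev t"
      unfolding ev_def by auto
    note A = key_attained[OF g c, of t]
    have P: "norm P < 1" and Q: "norm Q < 1" and ne: "P \<noteq> Q" using A PQ' by auto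
    have "H2 k1 k2 P Q \<le> H2 k1 k2 U V" if U: "norm U < 1" and V: "norm V < 1" and UV: "U \<noteq> V" for U V
    proof -
      have "Fg g P Q \<le> Fg g U V" using A(4) key_lower[OF g c U V UV] PQ' by simp
      then have "k1\<^sup>2 / (2 * pi) * Fg g P Q \<le> k1\<^sup>2 / (2 * pi) * Fg g U V" using kp by (simp only: mult_le_cancel_left_pos)
      then show ?thesis using H[OF P Q ne] H[OF U V UV] by simp
    qed
    then show "(P, Q) \<in> minset k1 k2" unfolding minset_def D using P Q ne by auto
  qed
  have S: "minset k1 k2 = {(P, Q). P \<in> diskD \<and> Q \<in> diskD \<and>
         (\<exists>\<theta>\<in>{0..<2*pi}. P = u *\<^sub>R vector [cos \<theta>, sin \<theta>] \<and>
                          Q = (- v) *\<^sub>R vector [cos \<theta>, sin \<theta>])}"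
  proof (rule set_eqI)
    fix z :: "(real^2) \<times> (real^2)"
    obtain P Q where z: "z = (P, Q)" by (cases z)
    show "z \<in> minset k1 k2 \<longleftrightarrow> z \<in> {(P, Q). P \<in> diskD \<and> Q \<in> diskD \<and>
         (\<exists>\<theta>\<in>{0..<2*pi}. P = u *\<^sub>R vector [cos \<theta>, sin \<theta>] \<and>
                          Q = (- v) *\<^sub>R vector [cos \<theta>, sin \<theta>])}" unfolding z using S1 S2 by blast
  qed
  show "let \<gamma> = - k2 / k1 in
      (\<lambda>g. fst (cvf g)) \<gamma> \<in> {0<..<1} \<and> (\<lambda>g. - snd (cvf g)) \<gamma> \<in> {-1<..<0} \<and>
      minset k1 k2 = {(P, Q). P \<in> diskD \<and> Q \<in> diskD \<and>
         (\<exists>\<theta>\<in>{0..<2*pi}. P = (\<lambda>g. fst (cvf g)) \<gamma> *\<^sub>R vector [cos \<theta>, sin \<theta>] \<and>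
                          Q = (\<lambda>g. - snd (cvf g)) \<gamma> *\<^sub>R vector [cos \<theta>, sin \<theta>])} \<and>
      (\<gamma> = 1 \<longrightarrow> (\<lambda>g. fst (cvf g)) \<gamma> = sqrt (sqrt 5 - 2) \<and> (\<lambda>g. - snd (cvf g)) \<gamma> = - sqrt (sqrt 5 - 2))"
    unfolding Let_def g_def[symmetric] u_def[symmetric] v_def[symmetric]
  proof (intro conjI impI)
    show "u \<in> {0<..<1}" "- v \<in> {-1<..<0}" using u v by auto
    show "minset k1 k2 = {(P, Q). P \<in> diskD \<and> Q \<in> diskD \<and>
         (\<exists>\<theta>\<in>{0..<2*pi}. P = u *\<^sub>R vector [cos \<theta>, sin \<theta>] \<and>
                          Q = (- v) *\<^sub>R vector [cos \<theta>, sin \<theta>])}" by (rule S)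
    assume "g = 1"
    then have "crit 1 u v" using c by simp
    then show "u = sqrt (sqrt 5 - 2)" "- v = - sqrt (sqrt 5 - 2)" using crit_one by auto
  qed
qed

end
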